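(* Let $n\ge2$, let $\mathbf{x}=(x_1,\dots,x_n)^T\in\mathbb{C}^n$ with $x_i\neq x_j$ for all $i\neq j$, and let $F$, $p$, $F''$ be as in the context. Let $\mathbf{y}$ be the result of one step of the Chebyshev method for $F$ starting from $\mathbf{x}$, i.e. \[ \mathbf{y}=\mathbf{x}-F'(\mathbf{x})^{-1}\Big(F(\mathbf{x})+\tfrac12\,F''(\mathbf{x})\big(F'(\mathbf{x})^{-1}F(\mathbf{x}),\,F'(\mathbf{x})^{-1}F(\mathbf{x})\big)\Big). \] With $W_l=\dfrac{p(x_l)}{\prod_{j=1,\,j\neq l}^n(x_l-x_j)}$ for $l=1,\dots,n$, one has for every $j=1,\dots,n$ \[ y_j=x_j-W_j\Big(1+\sum_{\nu=1,\,\nu\neq j}^n\frac{W_\nu}{x_\nu-x_j}\Big). \] Equivalently, with $B^{(l)}(t)=-\prod_{i=1,\,i\neq l}^n(t-x_i)$, \[ y_j=x_j-\frac{p(x_j)}{B^{(j)}(x_j)}\Big(\sum_{\nu=1,\,\nu\neq j}^n\frac{p(x_\nu)}{(x_\nu-x_j)\,B^{(\nu)}(x_\nu)}-1\Big). \]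
   Context: Let $p(t)=t^n+a_{n-1}t^{n-1}+\dots+a_1t+a_0$ be a monic polynomial of degree $n$ with real coefficients, and set $\mathbf{a}=(a_0,a_1,\dots,a_{n-1})^T$. Define $V=(v_1,\dots,v_n)^T:\mathbb{C}^n\to\mathbb{C}^n$ by \[ v_{n-\nu+1}(\mathbf{x})=\sum_{i_1<i_2<\dots<i_\nu}(-x_{i_1})(-x_{i_2})\cdots(-x_{i_\nu}),\qquad \nu=1,\dots,n, \] (the sum running over all $\nu$-element index sets $\{i_1<\dots<i_\nu\}\subseteq\{1,\dots,n\}$), so that $\prod_{j=1}^n(t-x_j)=t^n+\sum_{j=0}^{n-1}v_{j+1}(\mathbf{x})t^j$. Define $F=(f_1,\dots,f_n)^T:\mathbb{C}^n\to\mathbb{C}^n$ by $F(\mathbf{x})=V(\mathbf{x})-\mathbf{a}$, with Jacobian $F'(\mathbf{x})$ (invertible when the $x_i$ are pairwise distinct). For $k=1,\dots,n$, $A^{(k)}(\mathbf{x})\in\mathbb{C}^{n\times n}$ is the matrix whose $(i,l)$ entry is $\partial^2 f_i(\mathbf{x})/\partial x_l\partial x_k$, and the second derivative is the bilinear map $F''(\mathbf{x})(\mathbf{y},\mathbf{z})=\sum_{k=1}^n z_k\,A^{(k)}(\mathbf{x})\,\mathbf{y}$ for $\mathbf{y},\mathbf{z}\in\mathbb{C}^n$, i.e. $F''(\mathbf{x})(\mathbf{y},\mathbf{z})_i=\sum_{k,l}\frac{\partial^2 f_i(\mathbf{x})}{\partial x_l\partial x_k}y_l z_k$. *)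

theory Defs
  imports "HOL-Analysis.Analysis"
begin

text \<open>Conventions: vectors in C^n are functions nat => complex, component i (0-based, i < n)
  standing for the paper's component i+1. The coefficient vector a is nat => real with
  a j = a_j for j < n.\<close>

definition Vfun :: "nat \<Rightarrow> (nat \<Rightarrow> complex) \<Rightarrow> nat \<Rightarrow> complex" where
  "Vfun n x k = (\<Sum>S\<in>{S. S \<subseteq> {..<n} \<and> card S = n - k}. \<Prod>i\<in>S. - x i)"

definition Ffun :: "nat \<Rightarrow> (nat \<Rightarrow> real) \<Rightarrow> (nat \<Rightarrow> complex) \<Rightarrow> nat \<Rightarrow> complex" where
  "Ffun n a x k = Vfun n x k - complex_of_real (a k)"

definition pval :: "nat \<Rightarrow> (nat \<Rightarrow> real) \<Rightarrow> complex \<Rightarrow> complex" where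
  "pval n a t = t ^ n + (\<Sum>j<n. complex_of_real (a j) * t ^ j)"

definition pderivF :: "((nat \<Rightarrow> complex) \<Rightarrow> nat \<Rightarrow> complex) \<Rightarrow> (nat \<Rightarrow> complex) \<Rightarrow> nat \<Rightarrow> nat \<Rightarrow> complex" where
  "pderivF G x i l = deriv (\<lambda>t. G (x(l := t)) i) (x l)"

definition pderiv2F :: "((nat \<Rightarrow> complex) \<Rightarrow> nat \<Rightarrow> complex) \<Rightarrow> (nat \<Rightarrow> complex) \<Rightarrow> nat \<Rightarrow> nat \<Rightarrow> nat \<Rightarrow> complex" where
  "pderiv2F G x i l k = deriv (\<lambda>t. pderivF G (x(k := t)) i l) (x k)"

definition second_deriv_app :: "nat \<Rightarrow> ((nat \<Rightarrow> complex) \<Rightarrow> nat \<Rightarrow> complex) \<Rightarrow> (nat \<Rightarrow> complex)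
    \<Rightarrow> (nat \<Rightarrow> complex) \<Rightarrow> (nat \<Rightarrow> complex) \<Rightarrow> nat \<Rightarrow> complex" where
  "second_deriv_app n G x y z i = (\<Sum>k<n. \<Sum>l<n. pderiv2F G x i l k * y l * z k)"

definition inv_apply :: "nat \<Rightarrow> (nat \<Rightarrow> nat \<Rightarrow> complex) \<Rightarrow> (nat \<Rightarrow> complex) \<Rightarrow> nat \<Rightarrow> complex" where
  "inv_apply n M b = (THE u. (\<forall>i<n. (\<Sum>l<n. M i l * u l) = b i) \<and> (\<forall>i\<ge>n. u i = 0))"

definition chebyshev_step :: "nat \<Rightarrow> (nat \<Rightarrow> real) \<Rightarrow> (nat \<Rightarrow> complex) \<Rightarrow> nat \<Rightarrow> complex" where
  "chebyshev_step n a x =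
    (let F = Ffun n a; J = pderivF F x; u = inv_apply n J (F x);
         w = (\<lambda>i. F x i + (1/2) * second_deriv_app n F x u u i)
     in (\<lambda>j. x j - inv_apply n J w j))"

definition Weier :: "nat \<Rightarrow> (nat \<Rightarrow> real) \<Rightarrow> (nat \<Rightarrow> complex) \<Rightarrow> nat \<Rightarrow> complex" where
  "Weier n a x l = pval n a (x l) / (\<Prod>j\<in>{..<n} - {l}. (x l - x j))"

definition Bpoly :: "nat \<Rightarrow> (nat \<Rightarrow> complex) \<Rightarrow> nat \<Rightarrow> complex \<Rightarrow> complex" where
  "Bpoly n x l t = - (\<Prod>i\<in>{..<n} - {l}. (t - x i))"

end

theory Submission imports Defs "HOL-Computational_Algebra.Polynomial" begin

lemma prod_const_poly: "finite A \<Longrightarrow> (\<Prod>m\<in>A. [:c m:]) = [:\<Prod>m\<in>A. c m:]"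
  by (induction A rule: finite_induct) (auto simp: mult.commute)

lemma vieta_gen:
  fixes x :: "nat \<Rightarrow> complex"
  assumes "finite A" "k \<le> card A"
  shows "coeff (\<Prod>m\<in>A. [:- x m, 1:]) k = (\<Sum>S\<in>{S. S \<subseteq> A \<and> card S = card A - k}. \<Prod>i\<in>S. - x i)"
proof -
  have e: "[:- x m, 1:] = [:- x m:] + monom 1 1" for m
    by (simp add: monom_altdef)
  have "(\<Prod>m\<in>A. [:- x m, 1:]) = (\<Sum>X\<in>Pow A. (\<Prod>m\<in>X. [:- x m:]) * (\<Prod>m\<in>A-X. monom 1 1))"
    unfolding e by (rule prod_add[OF assms(1)])
  also have "\<dots> = (\<Sum>X\<in>Pow A. monom (\<Prod>m\<in>X. - x m) (card (A - X)))"
    apply (rule sum.cong[OF refl])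
    using assms(1) by (simp add: prod_const_poly finite_subset mult_monom monom_altdef power_mult_distrib[symmetric] flip: power_one)
  finally have "coeff (\<Prod>m\<in>A. [:- x m, 1:]) k = (\<Sum>X\<in>Pow A. if card (A - X) = k then (\<Prod>m\<in>X. - x m) else 0)"
    by (simp add: coeff_sum coeff_monom eq_commute)
  also have "\<dots> = (\<Sum>X\<in>{X\<in>Pow A. card (A - X) = k}. (\<Prod>m\<in>X. - x m))"
    using assms(1) by (subst sum.inter_filter) (auto simp: Pow_def)
  also have "{X\<in>Pow A. card (A - X) = k} = {S. S \<subseteq> A \<and> card S = card A - k}"
  proof -
    have "card (A - X) = card A - card X" if "X \<subseteq> A" for X
      using that assms(1) by (simp add: card_Diff_subset finite_subset)
    moreover have "card X \<le> card A" if "X \<subseteq> A" for X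
      using that assms(1) by (simp add: card_mono)
    ultimately show ?thesis using assms(2) by force
  qed
  finally show ?thesis .
qed

definition QP :: "(nat \<Rightarrow> complex) \<Rightarrow> nat set \<Rightarrow> complex poly" where
  "QP x S = (\<Prod>m\<in>S. [:- x m, 1:])"

lemma Vfun_coeff: "k < n \<Longrightarrow> Vfun n x k = coeff (QP x {..<n}) k"
  unfolding QP_def Vfun_def by (subst vieta_gen) auto

lemma QP_lead: "coeff (QP x {..<n}) n = 1"
proof -
  have "{S. S \<subseteq> {..<n} \<and> card S = 0} = {{}}"
    by (auto dest: finite_subset)
  then show ?thesis unfolding QP_def by (subst vieta_gen) auto
qed

lemma degree_QP: "finite S \<Longrightarrow> degree (QP x S) \<le> card S"
  unfolding QP_def using degree_prod_sum_le[of S "\<lambda>m. [:- x m, 1:]"] by simp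

lemma poly_QP: "poly (QP x S) t = (\<Prod>m\<in>S. t - x m)"
  unfolding QP_def by (simp add: poly_prod)

lemma QP_upd_in: "finite S \<Longrightarrow> l \<in> S \<Longrightarrow> QP (x(l:=t)) S = [:-t, 1:] * QP x (S - {l})"
  unfolding QP_def by (subst prod.remove, assumption, assumption) (auto intro!: prod.cong)

lemma QP_upd_out: "l \<notin> S \<Longrightarrow> QP (x(l:=t)) S = QP x S"
  unfolding QP_def by (auto intro!: prod.cong)

lemma coeff_lin: "coeff ([:-(t::complex), 1:] * q) i = coeff (pCons 0 q) i - t * coeff q i"
  by (cases i) (auto simp: coeff_pCons)

lemma deriv_lin: "deriv (\<lambda>t::complex. c - t * d) z = - d"
  by (rule DERIV_imp_deriv) (auto intro!: derivative_eq_intros)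

lemma deriv_const: "deriv (\<lambda>t::complex. c) z = 0"
  by simp

lemma pderivF_F:
  assumes "l < n" "i < n"
  shows "pderivF (Ffun n a) x i l = - coeff (QP x ({..<n}-{l})) i" 
proof -
  have "(\<lambda>t. Ffun n a (x(l := t)) i) = (\<lambda>t. (coeff (pCons 0 (QP x ({..<n}-{l}))) i - complex_of_real (a i)) - t * coeff (QP x ({..<n}-{l})) i)"
    using assms by (auto simp: Ffun_def Vfun_coeff QP_upd_in coeff_lin)
  then show ?thesis unfolding pderivF_def by (simp add: deriv_lin)
qed


lemma pderiv2F_F:
  assumes "l < n" "k < n" "i < n"
  shows "pderiv2F (Ffun n a) x i l k = (if k = l then 0 else coeff (QP x ({..<n}-{l}-{k})) i)"
proof (cases "k = l")
  case True
  have "(\<lambda>t. pderivF (Ffun n a) (x(k := t)) i l) = (\<lambda>t. - coeff (QP x ({..<n}-{l})) i)"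
    using assms True by (auto simp: pderivF_F QP_upd_out)
  then show ?thesis unfolding pderiv2F_def using True by simp
next
  case False
  have eq: "(\<lambda>t. pderivF (Ffun n a) (x(k := t)) i l) = (\<lambda>t. (- coeff (pCons 0 (QP x ({..<n}-{l}-{k}))) i) - t * (- coeff (QP x ({..<n}-{l}-{k})) i))"
    using assms False by (auto simp: pderivF_F QP_upd_in coeff_lin)
  then show ?thesis unfolding pderiv2F_def eq deriv_lin using False by simp
qed

lemma poly_sum_lt:
  fixes p :: "complex poly"
  assumes "degree p < N" shows "poly p t = (\<Sum>i<N. coeff p i * t ^ i)"
  unfolding poly_altdef
  by (rule sum.mono_neutral_left) (use assms in \<open>auto simp: coeff_eq_0\<close>)

lemma degree_QP_minus:
  assumes "1 \<le> n" "l < n" shows "degree (QP x ({..<n} - {l})) < n"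
proof -
  have "degree (QP x ({..<n} - {l})) \<le> card ({..<n} - {l})" by (rule degree_QP) auto
  also have "\<dots> \<le> n - 1" using assms by auto
  finally show ?thesis using assms by linarith
qed

definition Dp :: "nat \<Rightarrow> (nat \<Rightarrow> complex) \<Rightarrow> nat \<Rightarrow> complex" where
  "Dp n x j = (\<Prod>m\<in>{..<n} - {j}. x j - x m)"

lemma Dp_nz: "\<forall>i<n. \<forall>j<n. i \<noteq> j \<longrightarrow> x i \<noteq> x j \<Longrightarrow> j < n \<Longrightarrow> Dp n x j \<noteq> 0"
  unfolding Dp_def by auto

lemma poly_QP_at: "j \<in> S \<Longrightarrow> finite S \<Longrightarrow> poly (QP x S) (x j) = 0"
  unfolding poly_QP by (rule prod_zero) auto

lemma inv_apply_eq:
  fixes M :: "nat \<Rightarrow> nat \<Rightarrow> complex" and b :: "nat \<Rightarrow> complex"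
  assumes dist: "\<forall>i<n. \<forall>j<n. i \<noteq> j \<longrightarrow> x i \<noteq> x j" and n1: "1 \<le> n"
    and M: "\<And>i l. i < n \<Longrightarrow> l < n \<Longrightarrow> M i l = - coeff (QP x ({..<n}-{l})) i"
    and j: "j < n"
  shows "inv_apply n M b j = (\<Sum>i<n. b i * x j ^ i) / (- Dp n x j)"
proof -
  define z where "z l = (if l < n then (\<Sum>i<n. b i * x l ^ i) / (- Dp n x l) else 0)" for l
  have key: "(\<Sum>i<n. (\<Sum>l<n. M i l * u l) * t ^ i) = (\<Sum>l<n. - u l * poly (QP x ({..<n}-{l})) t)" for u t
  proof -
    have "(\<Sum>i<n. (\<Sum>l<n. M i l * u l) * t ^ i) = (\<Sum>l<n. \<Sum>i<n. M i l * u l * t ^ i)"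
      unfolding sum_distrib_right by (rule sum.swap)
    also have "\<dots> = (\<Sum>l<n. - u l * (\<Sum>i<n. coeff (QP x ({..<n}-{l})) i * t ^ i))"
      by (auto intro!: sum.cong simp: M sum_distrib_left)
    also have "\<dots> = (\<Sum>l<n. - u l * poly (QP x ({..<n}-{l})) t)"
      using degree_QP_minus[OF n1] by (intro sum.cong refl) (metis lessThan_iff poly_sum_lt)
    finally show ?thesis .
  qed
  have eval: "(\<Sum>l<n. c l * poly (QP x ({..<n}-{l})) (x j')) = c j' * Dp n x j'" if "j' < n" for c j'
  proof -
    have "(\<Sum>l<n. c l * poly (QP x ({..<n}-{l})) (x j')) = c j' * poly (QP x ({..<n}-{j'})) (x j')"
      using that by (subst sum.remove[of _ j']) (auto intro!: sum.neutral poly_QP_at)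
    then show ?thesis by (simp add: poly_QP Dp_def)
  qed
  have uniq: "u j' = z j'" if hu: "(\<forall>i<n. (\<Sum>l<n. M i l * u l) = b i) \<and> (\<forall>i\<ge>n. u i = 0)" for u j'
  proof (cases "j' < n")
    case True
    have "(\<Sum>i<n. b i * x j' ^ i) = (\<Sum>i<n. (\<Sum>l<n. M i l * u l) * x j' ^ i)"
      using hu by simp
    also have "\<dots> = - u j' * Dp n x j'" unfolding key using eval[OF True, of "\<lambda>l. - u l"] by simp
    finally show ?thesis using True Dp_nz[OF dist True] by (simp add: z_def field_simps)
  next
    case False then show ?thesis using hu by (simp add: z_def)
  qed
  have ex: "(\<forall>i<n. (\<Sum>l<n. M i l * z l) = b i) \<and> (\<forall>i\<ge>n. z i = 0)"
  proof -
    define R where "R = (\<Sum>l<n. smult (- z l) (QP x ({..<n}-{l})))"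
    define Bw where "Bw = (\<Sum>i<n. monom (b i) i)"
    have dR: "degree R < n" unfolding R_def
      using degree_QP_minus[OF n1] n1
      by (intro le_less_trans[OF degree_sum_le[of _ _ "n - 1"]]) (auto intro: le_trans[OF degree_smult_le] simp: less_Suc_eq_le, metis Suc_pred less_Suc_eq_le n1 less_le_trans zero_less_one)
    have dB: "degree Bw < n" unfolding Bw_def
      using n1
      by (intro le_less_trans[OF degree_sum_le[of _ _ "n - 1"]]) (auto intro: le_trans[OF degree_monom_le])
    have "R = Bw"
    proof (rule poly_eqI_degree[of "x ` {..<n}"])
      fix t assume "t \<in> x ` {..<n}"
      then obtain j' where j': "j' < n" "t = x j'" by auto
      have "poly R t = (\<Sum>l<n. - z l * poly (QP x ({..<n}-{l})) (x j'))"
        unfolding R_def j' by (simp add: poly_sum)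
      also have "\<dots> = - z j' * Dp n x j'" by (rule eval[OF j'(1)])
      also have "\<dots> = (\<Sum>i<n. b i * x j' ^ i)"
        using j' Dp_nz[OF dist j'(1)] by (simp add: z_def)
      also have "\<dots> = poly Bw t" unfolding Bw_def j' by (simp add: poly_sum poly_monom)
      finally show "poly R t = poly Bw t" .
    next
      have "card (x ` {..<n}) = n"
        using dist by (subst card_image) (auto simp: inj_on_def)
      then show "degree R < card (x ` {..<n})" "degree Bw < card (x ` {..<n})" using dR dB by auto
    qed
    have "(\<Sum>l<n. M i l * z l) = b i" if "i < n" for i
    proof -
      have "(\<Sum>l<n. M i l * z l) = coeff R i"
        unfolding R_def using that by (auto simp: coeff_sum M intro!: sum.cong)
      also have "\<dots> = coeff Bw i" using \<open>R = Bw\<close> by simp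
      also have "\<dots> = b i" unfolding Bw_def using that by (simp add: coeff_sum coeff_monom)
      finally show ?thesis .
    qed
    then show ?thesis by (simp add: z_def)
  qed
  have "inv_apply n M b = z"
    unfolding inv_apply_def
  proof (rule the_equality)
    show "(\<forall>i<n. (\<Sum>l<n. M i l * z l) = b i) \<and> (\<forall>i\<ge>n. z i = 0)" by (rule ex)
    fix u assume "(\<forall>i<n. (\<Sum>l<n. M i l * u l) = b i) \<and> (\<forall>i\<ge>n. u i = 0)"
    then show "u = z" by (intro ext uniq)
  qed
  then show ?thesis using j by (simp add: z_def)
qed

lemma degree_QP_sub: "1 \<le> n \<Longrightarrow> l < n \<Longrightarrow> degree (QP x ({..<n} - {l} - {k})) < n"
proof -
  assume a: "1 \<le> n" "l < n"
  have "degree (QP x ({..<n} - {l} - {k})) \<le> card ({..<n} - {l} - {k})" by (rule degree_QP) auto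
  also have "\<dots> \<le> card ({..<n} - {l})" by (rule card_mono) auto
  also have "\<dots> = n - 1" using a by auto
  finally show ?thesis using a by linarith
qed

lemma Fsum:
  assumes "j < n"
  shows "(\<Sum>i<n. Ffun n a x i * x j ^ i) = - pval n a (x j)"
proof -
  have "poly (QP x {..<n}) (x j) = (\<Sum>i<Suc n. coeff (QP x {..<n}) i * x j ^ i)"
    by (rule poly_sum_lt) (use degree_QP[of "{..<n}" x] in auto)
  also have "\<dots> = (\<Sum>i<n. coeff (QP x {..<n}) i * x j ^ i) + x j ^ n"
    by (simp add: QP_lead)
  finally have e: "(\<Sum>i<n. coeff (QP x {..<n}) i * x j ^ i) = - (x j ^ n)"
    using poly_QP_at[of j "{..<n}" x] assms by (simp add: eq_neg_iff_add_eq_0)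
  have "(\<Sum>i<n. Ffun n a x i * x j ^ i) = (\<Sum>i<n. coeff (QP x {..<n}) i * x j ^ i) - (\<Sum>i<n. complex_of_real (a i) * x j ^ i)"
    by (simp add: Ffun_def Vfun_coeff sum_subtractf left_diff_distrib)
  then show ?thesis using e by (simp add: pval_def)
qed

lemma second_sum:
  assumes dist: "\<forall>i<n. \<forall>j<n. i \<noteq> j \<longrightarrow> x i \<noteq> x j" and n1: "1 \<le> n" and j: "j < n"
  shows "(\<Sum>i<n. second_deriv_app n (Ffun n a) x u u i * x j ^ i)
        = 2 * u j * (\<Sum>l\<in>{..<n}-{j}. u l * (Dp n x j / (x j - x l)))"
proof -
  define T where "T k l = (if k = l then 0 else u l * u k * poly (QP x ({..<n}-{l}-{k})) (x j))" for k l
  have "(\<Sum>i<n. second_deriv_app n (Ffun n a) x u u i * x j ^ i)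
      = (\<Sum>i<n. \<Sum>k<n. \<Sum>l<n. pderiv2F (Ffun n a) x i l k * u l * u k * x j ^ i)"
    by (simp add: second_deriv_app_def sum_distrib_right)
  also have "\<dots> = (\<Sum>k<n. \<Sum>i<n. \<Sum>l<n. pderiv2F (Ffun n a) x i l k * u l * u k * x j ^ i)"
    by (rule sum.swap)
  also have "\<dots> = (\<Sum>k<n. \<Sum>l<n. \<Sum>i<n. pderiv2F (Ffun n a) x i l k * u l * u k * x j ^ i)"
    by (rule sum.cong[OF refl], rule sum.swap)
  also have "\<dots> = (\<Sum>k<n. \<Sum>l<n. T k l)"
  proof (intro sum.cong refl)
    fix k l assume kl: "k \<in> {..<n}" "l \<in> {..<n}"
    show "(\<Sum>i<n. pderiv2F (Ffun n a) x i l k * u l * u k * x j ^ i) = T k l"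
    proof (cases "k = l")
      case True then show ?thesis using kl by (simp add: pderiv2F_F T_def)
    next
      case False
      have "(\<Sum>i<n. pderiv2F (Ffun n a) x i l k * u l * u k * x j ^ i)
          = u l * u k * (\<Sum>i<n. coeff (QP x ({..<n}-{l}-{k})) i * x j ^ i)"
        using kl False by (auto simp: pderiv2F_F sum_distrib_left intro!: sum.cong)
      also have "\<dots> = T k l"
        using False degree_QP_sub[OF n1, of l x k] kl by (simp add: T_def poly_sum_lt)
      finally show ?thesis .
    qed
  qed
  also have "\<dots> = (\<Sum>l<n. T j l) + (\<Sum>k\<in>{..<n}-{j}. T k j)"
  proof -
    have "(\<Sum>l<n. T k l) = T k j" if "k \<in> {..<n}-{j}" for k
    proof -
      have "T k l = 0" if "l \<in> {..<n}-{j}" for l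
        using that \<open>k \<in> {..<n}-{j}\<close> j poly_QP_at[of j "{..<n}-{l}-{k}" x] by (simp add: T_def)
      then show ?thesis using j by (subst sum.remove[of _ j]) auto
    qed
    then show ?thesis using j by (subst sum.remove[of _ j]) auto
  qed
  also have "\<dots> = 2 * (\<Sum>l\<in>{..<n}-{j}. T j l)"
  proof -
    have "(\<Sum>l<n. T j l) = (\<Sum>l\<in>{..<n}-{j}. T j l)"
      using j by (subst sum.remove[of _ j]) (auto simp: T_def)
    moreover have "T k j = T j k" for k
      by (simp add: T_def Diff_insert2[symmetric] insert_commute mult.commute)
    ultimately show ?thesis by simp
  qed
  also have "\<dots> = 2 * u j * (\<Sum>l\<in>{..<n}-{j}. u l * (Dp n x j / (x j - x l)))"
  proof -
    have "T j l = u j * (u l * (Dp n x j / (x j - x l)))" if l: "l \<in> {..<n}-{j}" for l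
    proof -
      have "Dp n x j = (x j - x l) * (\<Prod>m\<in>{..<n}-{j}-{l}. x j - x m)"
        unfolding Dp_def using l by (subst prod.remove[of _ l]) auto
      moreover have "x j - x l \<noteq> 0" using dist l j by auto
      moreover have "{..<n}-{l}-{j} = {..<n}-{j}-{l}" by auto
      ultimately show ?thesis using l by (simp add: T_def poly_QP)
    qed
    then have "(\<Sum>l\<in>{..<n}-{j}. T j l) = (\<Sum>l\<in>{..<n}-{j}. u j * (u l * (Dp n x j / (x j - x l))))"
      by (intro sum.cong) auto
    then show ?thesis by (simp only: sum_distrib_left mult.assoc)
  qed
  finally show ?thesis .
qed

theorem mainTheorem7:
  fixes n :: nat and a :: "nat \<Rightarrow> real" and x :: "nat \<Rightarrow> complex"
  assumes "n \<ge> 2"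
    and "\<forall>i<n. \<forall>j<n. i \<noteq> j \<longrightarrow> x i \<noteq> x j"
  shows "\<forall>j<n.
     chebyshev_step n a x j
       = x j - Weier n a x j * (1 + (\<Sum>\<nu>\<in>{..<n} - {j}. Weier n a x \<nu> / (x \<nu> - x j)))
   \<and> chebyshev_step n a x j
       = x j - pval n a (x j) / Bpoly n x j (x j)
           * ((\<Sum>\<nu>\<in>{..<n} - {j}. pval n a (x \<nu>) / ((x \<nu> - x j) * Bpoly n x \<nu> (x \<nu>))) - 1)"
proof (intro allI impI)
  fix j assume j: "j < n"
  have n1: "1 \<le> n" using assms(1) by auto
  note dist = assms(2)
  define F where "F = Ffun n a"
  define J where "J = pderivF F x"
  define u where "u = inv_apply n J (F x)"
  define w where "w = (\<lambda>i. F x i + (1/2) * second_deriv_app n F x u u i)"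
  have HJ: "\<And>i l. i < n \<Longrightarrow> l < n \<Longrightarrow> J i l = - coeff (QP x ({..<n}-{l})) i"
    unfolding J_def F_def by (rule pderivF_F)
  have WD: "Weier n a x l = pval n a (x l) / Dp n x l" for l
    by (simp add: Weier_def Dp_def)
  have BD: "Bpoly n x l (x l) = - Dp n x l" for l
    by (simp add: Bpoly_def Dp_def)
  have uW: "u l = Weier n a x l" if "l < n" for l
    unfolding u_def using inv_apply_eq[OF dist n1 HJ that, of "F x"] Fsum[OF that, of a] 
    by (simp add: F_def WD)
  have step: "chebyshev_step n a x j = x j - inv_apply n J w j"
    by (simp add: chebyshev_step_def Let_def J_def u_def w_def F_def)
  have "(\<Sum>i<n. w i * x j ^ i) = - pval n a (x j) + (1/2) * (\<Sum>i<n. second_deriv_app n F x u u i * x j ^ i)"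
    using Fsum[OF j, of a] by (simp add: w_def distrib_right sum.distrib sum_distrib_left F_def mult.assoc)
  also have "\<dots> = - pval n a (x j) + u j * (\<Sum>l\<in>{..<n}-{j}. u l * (Dp n x j / (x j - x l)))"
    unfolding F_def using second_sum[OF dist n1 j, of a u] by simp
  finally have ws: "(\<Sum>i<n. w i * x j ^ i) = - pval n a (x j) + Weier n a x j * (Dp n x j * (\<Sum>l\<in>{..<n}-{j}. Weier n a x l / (x j - x l)))"
    using j by (simp add: uW sum_distrib_left mult_ac)
  have Dnz: "Dp n x j \<noteq> 0" by (rule Dp_nz[OF dist j])
  have "inv_apply n J w j = (\<Sum>i<n. w i * x j ^ i) / (- Dp n x j)"
    by (rule inv_apply_eq[OF dist n1 HJ j])
  also have "\<dots> = Weier n a x j * (1 - (\<Sum>l\<in>{..<n}-{j}. Weier n a x l / (x j - x l)))"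
    unfolding ws using Dnz by (simp add: WD field_simps)
  also have "(\<Sum>l\<in>{..<n}-{j}. Weier n a x l / (x j - x l)) = - (\<Sum>l\<in>{..<n}-{j}. Weier n a x l / (x l - x j))"
    unfolding sum_negf[symmetric]
  proof (rule sum.cong[OF refl])
    fix l show "Weier n a x l / (x j - x l) = - (Weier n a x l / (x l - x j))"
      by (metis minus_diff_eq minus_divide_right)
  qed
  finally have z: "inv_apply n J w j = Weier n a x j * (1 + (\<Sum>l\<in>{..<n}-{j}. Weier n a x l / (x l - x j)))"
    by simp
  have e1: "chebyshev_step n a x j = x j - Weier n a x j * (1 + (\<Sum>\<nu>\<in>{..<n} - {j}. Weier n a x \<nu> / (x \<nu> - x j)))"
    using step z by simp
  have "(\<Sum>\<nu>\<in>{..<n} - {j}. pval n a (x \<nu>) / ((x \<nu> - x j) * Bpoly n x \<nu> (x \<nu>)))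
      = - (\<Sum>\<nu>\<in>{..<n} - {j}. Weier n a x \<nu> / (x \<nu> - x j))"
    unfolding sum_negf[symmetric]
  proof (rule sum.cong[OF refl])
    fix l show "pval n a (x l) / ((x l - x j) * Bpoly n x l (x l)) = - (Weier n a x l / (x l - x j))"
      unfolding BD WD by (simp add: divide_simps)
  qed
  moreover have "pval n a (x j) / Bpoly n x j (x j) = - Weier n a x j"
    by (simp add: BD WD)
  ultimately show "chebyshev_step n a x j
       = x j - Weier n a x j * (1 + (\<Sum>\<nu>\<in>{..<n} - {j}. Weier n a x \<nu> / (x \<nu> - x j)))
   \<and> chebyshev_step n a x j
       = x j - pval n a (x j) / Bpoly n x j (x j)
           * ((\<Sum>\<nu>\<in>{..<n} - {j}. pval n a (x \<nu>) / ((x \<nu> - x j) * Bpoly n x \<nu> (x \<nu>))) - 1)"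
    using e1 by (simp add: algebra_simps)
qed

end
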